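(* Let $f:[0,\infty)\to[0,\infty)$ be a continuous and non-decreasing function, and let $(x_N)_{N\in\mathbb{N}}$ be a sequence in $[0,1)$. Suppose there exist some $k\in\mathbb{N}$ and infinitely many $N\in\mathbb{N}$ such that the finite point set $x_1,\ldots,x_N$ has at most $k$ distinct gap lengths. Then $(x_N)_{N\in\mathbb{N}}$ does not have $f$-pair correlations; that is, it is not the case that \[ \lim_{N\to\infty}\frac{1}{N}\,\#\left\{1\le i\neq j\le N \;\middle|\; \|x_i-x_j\|\le \frac{s}{N}\right\} = f(s) \] holds for all $s\ge 0$.
   Context: Points of $[0,1)$ are regarded as points of the torus $\mathbb{T}^1=[0,1]/\sim$ (with $0$ and $1$ identified). For $x\in\mathbb{R}$, $\|x\|=\min\{|x-z| : z\in\mathbb{Z}\}$ denotes the distance to the nearest integer. For $s\ge 0$ and $N\in\mathbb{N}$, set $R(s,N)=\#\{1\le i\neq j\le N : \|x_i-x_j\|\le s/N\}$ (counting ordered pairs of distinct indices). A sequence has $f$-pair correlations if $\lim_{N\to\infty}\frac1N R(s,N)=f(s)$ for all $s\ge0$. The gap lengths of a finite point set $x_1,\ldots,x_N$ in $\mathbb{T}^1$ are the distances between neighboring elements on the circle: if $y_1\le y_2\le\cdots\le y_N$ is the nondecreasing rearrangement of $x_1,\ldots,x_N$ (repeated points allowed, so a gap length may be $0$), the gap lengths are the values $\|y_{i+1}-y_i\|$ for $1\le i\le N$, where $y_{N+1}:=y_1$. *)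

theory Defs
  imports "HOL-Analysis.Analysis"
begin

definition nint_dist :: "real \<Rightarrow> real" where
  "nint_dist x = (INF z::int. \<bar>x - of_int z\<bar>)"

definition pair_count :: "(nat \<Rightarrow> real) \<Rightarrow> real \<Rightarrow> nat \<Rightarrow> nat" where
  "pair_count x s N = card {(i, j). i \<in> {1..N} \<and> j \<in> {1..N} \<and> i \<noteq> j \<and>
      nint_dist (x i - x j) \<le> s / real N}"

text \<open>Gap lengths of x_1,...,x_N on the circle (cyclic neighbours of the sorted list).\<close>
definition gap_lengths :: "(nat \<Rightarrow> real) \<Rightarrow> nat \<Rightarrow> real set" where
  "gap_lengths x N = (let y = sort (map x [1..<N+1]) in
      {nint_dist (y ! ((i + 1) mod N) - y ! i) | i. i < N})"

end

theory Submission
  imports Defs "HOL-Combinatorics.Permutations"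
begin

lemma nd_bdd: "bdd_below ((\<lambda>z::int. \<bar>(a::real) - of_int z\<bar>) ` UNIV)"
  by (rule bdd_belowI[of _ 0]) auto

lemma nd_le: "nint_dist a \<le> \<bar>a - of_int z\<bar>"
  unfolding nint_dist_def by (rule cINF_lower[OF nd_bdd]) auto

lemma nd_nonneg: "0 \<le> nint_dist a"
  unfolding nint_dist_def by (rule cINF_greatest) auto

lemma nd_zero: "nint_dist 0 = 0"
  using nd_le[of 0 0] nd_nonneg[of 0] by simp

lemma nd_minus: "nint_dist (- a) = nint_dist a"
proof -
  have "(\<lambda>z::int. \<bar>- a - of_int z\<bar>) ` UNIV = (\<lambda>z::int. \<bar>a - of_int z\<bar>) ` UNIV"
  proof (intro equalityI subsetI)
    fix t assume "t \<in> (\<lambda>z::int. \<bar>- a - of_int z\<bar>) ` UNIV"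
    then obtain z where "t = \<bar>- a - of_int z\<bar>" by auto
    then have "t = \<bar>a - of_int (-z)\<bar>" by simp
    then show "t \<in> (\<lambda>z::int. \<bar>a - of_int z\<bar>) ` UNIV" by blast
  next
    fix t assume "t \<in> (\<lambda>z::int. \<bar>a - of_int z\<bar>) ` UNIV"
    then obtain z where "t = \<bar>a - of_int z\<bar>" by auto
    then have "t = \<bar>- a - of_int (-z)\<bar>" by simp
    then show "t \<in> (\<lambda>z::int. \<bar>- a - of_int z\<bar>) ` UNIV" by blast
  qed
  then show ?thesis unfolding nint_dist_def by simp
qed

lemma nd_pos: assumes "0 < a" "a < 1" shows "nint_dist a \<noteq> 0"
proof -
  have "min a (1 - a) \<le> nint_dist a"
    unfolding nint_dist_def
  proof (rule cINF_greatest)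
    fix z :: int
    show "min a (1 - a) \<le> \<bar>a - of_int z\<bar>"
    proof (cases "z \<le> 0")
      case True then have "real_of_int z \<le> 0" by simp
      then show ?thesis using assms by auto
    next
      case False then have "real_of_int z \<ge> 1" by simp
      then show ?thesis using assms by auto
    qed
  qed auto
  then show ?thesis using assms by auto
qed

lemma sort_perm:
  fixes x :: "nat \<Rightarrow> real"
  obtains \<sigma> where "inj_on \<sigma> {..<N}" "\<sigma> ` {..<N} \<subseteq> {1..N}"
    "\<And>p. p < N \<Longrightarrow> sort (map x [1..<N+1]) ! p = x (\<sigma> p)"
    "length (sort (map x [1..<N+1])) = N" "sorted (sort (map x [1..<N+1]))"
proof -
  let ?xs = "map x [1..<N+1]"
  have "mset (sort ?xs) = mset ?xs" by simp
  then obtain q where q: "q permutes {..<length ?xs}" "permute_list q ?xs = sort ?xs"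
    by (rule mset_eq_permutation)
  have len: "length ?xs = N" by simp
  have qN: "\<And>p. p < N \<Longrightarrow> q p < N" using permutes_in_image[OF q(1)] len by auto
  have nth: "sort ?xs ! p = x (q p + 1)" if "p < N" for p
  proof -
    have "sort ?xs ! p = ?xs ! (q p)"
      using permute_list_nth[OF q(1)] that len q(2) by (metis)
    also have "\<dots> = x (q p + 1)" using qN[OF that] by (simp del: upt_Suc)
    finally show ?thesis .
  qed
  have inj: "inj_on (\<lambda>p. q p + 1) {..<N}"
    using permutes_inj[OF q(1)] by (auto simp: inj_on_def inj_def)
  show ?thesis
    apply (rule that[of "\<lambda>p. q p + 1"])
    using inj qN nth by (auto simp del: upt_Suc simp: Suc_leI)
qed

lemma const_chain:
  fixes f :: "nat \<Rightarrow> real"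
  assumes "\<forall>g. p \<le> g \<and> g < q \<longrightarrow> f g = f (Suc g)" "p \<le> q"
  shows "f p = f q"
  using assms
proof (induction q)
  case 0 then show ?case by simp
next
  case (Suc q)
  show ?case
  proof (cases "p = Suc q")
    case True then show ?thesis by simp
  next
    case False
    then have "p \<le> q" using Suc.prems by simp
    then have "f p = f q" using Suc by simp
    also have "f q = f (Suc q)" using Suc.prems \<open>p \<le> q\<close> by simp
    finally show ?thesis .
  qed
qed

lemma pigeon:
  fixes g :: "nat \<Rightarrow> real"
  assumes "finite P" "P \<noteq> {}"
  obtains v where "v \<in> g ` P" "card P \<le> card (g ` P) * card {p\<in>P. g p = v}"
proof -
  let ?h = "\<lambda>v. card {p\<in>P. g p = v}"
  have fin: "finite (g ` P)" "g ` P \<noteq> {}" using assms by auto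
  have "Max (?h ` g ` P) \<in> ?h ` g ` P" using fin by (intro Max_in) auto
  then obtain v where v1: "Max (?h ` g ` P) = ?h v" "v \<in> g ` P" by (rule imageE)
  have v: "v \<in> g ` P" "\<forall>u\<in>g ` P. ?h u \<le> ?h v"
  proof -
    show "v \<in> g ` P" by (rule v1(2))
    show "\<forall>u\<in>g ` P. ?h u \<le> ?h v"
    proof
      fix u assume "u \<in> g ` P"
      then have "?h u \<le> Max (?h ` g ` P)" using fin by (intro Max_ge) auto
      then show "?h u \<le> ?h v" using v1(1) by simp
    qed
  qed
  have "card P = (\<Sum>u\<in>g ` P. ?h u)"
    using sum.image_gen[OF assms(1), of "\<lambda>_. (1::nat)" g] by simp
  also have "\<dots> \<le> (\<Sum>u\<in>g ` P. ?h v)" by (rule sum_mono) (use v in auto)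
  also have "\<dots> = card (g ` P) * ?h v" by simp
  finally show ?thesis using that v(1) by blast
qed

locale setting =
  fixes x :: "nat \<Rightarrow> real" and N :: nat and \<sigma> :: "nat \<Rightarrow> nat" and y :: "real list"
  assumes N2: "N \<ge> 2" and inj: "inj_on \<sigma> {..<N}" and img: "\<sigma> ` {..<N} \<subseteq> {1..N}"
    and ynth: "\<And>p. p < N \<Longrightarrow> y ! p = x (\<sigma> p)" and len: "length y = N"
    and srt: "sorted y" and rng: "\<And>p. p < N \<Longrightarrow> y ! p \<in> {0..<1}"
begin

definition gp :: "nat \<Rightarrow> real" where
  "gp p = nint_dist (y ! ((p + 1) mod N) - y ! p)"

lemma mono_y: "p \<le> q \<Longrightarrow> q < N \<Longrightarrow> y ! p \<le> y ! q"
  using srt len by (simp add: sorted_iff_nth_mono)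

lemma gap_sum: "(\<Sum>p<N. gp p) \<le> 1"
proof -
  obtain M where M: "N = Suc M" using N2 by (cases N) auto
  have a: "gp p \<le> y ! (Suc p) - y ! p" if "p < M" for p
  proof -
    have "(p + 1) mod N = Suc p" using that M by simp
    then have "gp p = nint_dist (y ! (Suc p) - y ! p)" by (simp add: gp_def)
    also have "\<dots> \<le> \<bar>y ! (Suc p) - y ! p - of_int 0\<bar>" by (rule nd_le)
    also have "\<dots> = y ! (Suc p) - y ! p" using mono_y[of p "Suc p"] that M by simp
    finally show ?thesis .
  qed
  have b: "gp M \<le> 1 - (y ! M - y ! 0)"
  proof -
    have "(M + 1) mod N = 0" using M by simp
    then have "gp M = nint_dist (y ! 0 - y ! M)" by (simp add: gp_def)
    also have "\<dots> \<le> \<bar>y ! 0 - y ! M - of_int (-1)\<bar>" by (rule nd_le)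
    also have "\<dots> = 1 - (y ! M - y ! 0)" using rng[of 0] rng[of M] M by auto
    finally show ?thesis .
  qed
  have "(\<Sum>p<N. gp p) = (\<Sum>p<M. gp p) + gp M" using M by simp
  also have "\<dots> \<le> (\<Sum>p<M. y ! (Suc p) - y ! p) + (1 - (y ! M - y ! 0))"
    using sum_mono[of "{..<M}" gp "\<lambda>p. y ! (Suc p) - y ! p"] a b by force
  also have "(\<Sum>p<M. y ! (Suc p) - y ! p) = y ! M - y ! 0"
    by (rule sum_lessThan_telescope)
  finally show ?thesis by simp
qed

lemma gp_nonneg: "0 \<le> gp p" unfolding gp_def by (rule nd_nonneg)

lemma exact_pairs:
  "card {p. p < N \<and> gp p = v} \<le> card {(i, j). i \<in> {1..N} \<and> j \<in> {1..N} \<and> i \<noteq> j \<and>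
      nint_dist (x i - x j) = v}"
proof -
  let ?E = "{(i, j). i \<in> {1..N} \<and> j \<in> {1..N} \<and> i \<noteq> j \<and> nint_dist (x i - x j) = v}"
  let ?m = "\<lambda>p. (\<sigma> ((p + 1) mod N), \<sigma> p)"
  have fin: "finite ?E" by (rule finite_subset[of _ "{1..N} \<times> {1..N}"]) auto
  have "inj_on ?m {p. p < N \<and> gp p = v}"
  proof (rule inj_onI)
    fix p p' assume "p \<in> {p. p < N \<and> gp p = v}" "p' \<in> {p. p < N \<and> gp p = v}" "?m p = ?m p'"
    then show "p = p'" using inj_onD[OF inj, of p p'] by simp
  qed
  moreover have "?m ` {p. p < N \<and> gp p = v} \<subseteq> ?E"
  proof
    fix t assume "t \<in> ?m ` {p. p < N \<and> gp p = v}"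
    then obtain p where p: "p < N" "gp p = v" "t = ?m p" by auto
    have q: "(p + 1) mod N < N" using N2 by simp
    have ne: "(p + 1) mod N \<noteq> p"
    proof
      assume h: "(p + 1) mod N = p"
      show False
      proof (cases "p + 1 < N")
        case True then show False using h by simp
      next
        case False then have "p + 1 = N" using p by simp
        then show False using h N2 by simp
      qed
    qed
    have "\<sigma> ((p + 1) mod N) \<noteq> \<sigma> p" using inj ne q p(1) by (auto simp: inj_on_def)
    moreover have "\<sigma> ((p + 1) mod N) \<in> {1..N}" "\<sigma> p \<in> {1..N}"
      using img q p(1) by (blast, blast)
    moreover have "nint_dist (x (\<sigma> ((p + 1) mod N)) - x (\<sigma> p)) = v"
      using p ynth[OF q] ynth[OF p(1)] by (simp add: gp_def)
    ultimately show "t \<in> ?E" using p(3) by auto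
  qed
  ultimately show ?thesis using card_inj_on_le fin by blast
qed


lemma zero_pairs:
  "card {(p, q). p < q \<and> q < N \<and> q \<le> p + w \<and> y ! p = y ! q} \<le> pair_count x 0 N"
proof -
  let ?S = "{(p, q). p < q \<and> q < N \<and> q \<le> p + w \<and> y ! p = y ! q}"
  let ?E = "{(i, j). i \<in> {1..N} \<and> j \<in> {1..N} \<and> i \<noteq> j \<and> nint_dist (x i - x j) \<le> 0 / real N}"
  let ?m = "\<lambda>(p, q). (\<sigma> p, \<sigma> q)"
  have fin: "finite ?E" by (rule finite_subset[of _ "{1..N} \<times> {1..N}"]) auto
  have "inj_on ?m ?S"
  proof (rule inj_onI)
    fix a b assume "a \<in> ?S" "b \<in> ?S" "?m a = ?m b"
    then show "a = b" using inj_onD[OF inj, of "fst a" "fst b"] inj_onD[OF inj, of "snd a" "snd b"]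
      by (auto simp: prod_eq_iff)
  qed
  moreover have "?m ` ?S \<subseteq> ?E"
  proof
    fix t assume "t \<in> ?m ` ?S"
    then obtain p q where pq: "p < q" "q < N" "y ! p = y ! q" "t = (\<sigma> p, \<sigma> q)" by auto
    have pN: "p < N" using pq by simp
    have "\<sigma> p \<noteq> \<sigma> q" using inj_onD[OF inj, of p q] pq pN by auto
    moreover have "\<sigma> p \<in> {1..N}" "\<sigma> q \<in> {1..N}" using img pq(2) pN by (blast, blast)
    moreover have "nint_dist (x (\<sigma> p) - x (\<sigma> q)) = 0"
      using pq ynth[OF pN] ynth[OF pq(2)] by (simp add: nd_zero)
    ultimately show "t \<in> ?E" using pq(4) by auto
  qed
  ultimately have "card ?S \<le> card ?E" using card_inj_on_le fin by blast
  then show ?thesis unfolding pair_count_def by simp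
qed

lemma window:
  "w * (N - w) \<le> card {(p, q). p < q \<and> q < N \<and> q \<le> p + w \<and> y ! p = y ! q}
     + w * w * card {p. p < N \<and> gp p \<noteq> 0}"
proof -
  let ?S = "{(p, q). p < q \<and> q < N \<and> q \<le> p + w \<and> y ! p = y ! q}"
  let ?T = "{(p, q). p < q \<and> q < N \<and> q \<le> p + w}"
  let ?Z = "{p. p < N \<and> gp p \<noteq> 0}"
  let ?B = "\<lambda>g. {g + 1 - w..g} \<times> {g + 1..g + w}"
  have finT: "finite ?T" by (rule finite_subset[of _ "{..<N} \<times> {..<N}"]) auto
  have "card ({..<N - w} \<times> {1..w}) \<le> card ?T"
  proof (rule card_inj_on_le[of "\<lambda>(p, d). (p, p + d)"])
    show "inj_on (\<lambda>(p, d). (p, p + d)) ({..<N - w} \<times> {1..w})" by (auto simp: inj_on_def)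
    show "(\<lambda>(p, d). (p, p + d)) ` ({..<N - w} \<times> {1..w}) \<subseteq> ?T" by auto
  qed (rule finT)
  then have T: "w * (N - w) \<le> card ?T" by (simp add: card_cartesian_product mult.commute)
  have sub: "?T - ?S \<subseteq> (\<Union>g\<in>?Z. ?B g)"
  proof
    fix t assume t: "t \<in> ?T - ?S"
    then obtain p q where pq: "t = (p, q)" "p < q" "q < N" "q \<le> p + w" "y ! p \<noteq> y ! q" by auto
    have "\<exists>g. p \<le> g \<and> g < q \<and> y ! g \<noteq> y ! Suc g"
    proof (rule ccontr)
      assume "\<not> ?thesis"
      then have "\<forall>g. p \<le> g \<and> g < q \<longrightarrow> (\<lambda>i. y ! i) g = (\<lambda>i. y ! i) (Suc g)" by auto
      from const_chain[OF this] pq show False by simp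
    qed
    then obtain g where g: "p \<le> g" "g < q" "y ! g \<noteq> y ! Suc g" by blast
    have gN: "Suc g < N" using g pq by simp
    have "y ! g \<le> y ! Suc g" using mono_y[of g "Suc g"] gN by simp
    then have d: "0 < y ! Suc g - y ! g" "y ! Suc g - y ! g < 1"
      using g(3) rng[of g] rng[OF gN] gN by auto
    have "(g + 1) mod N = Suc g" using gN by simp
    then have "gp g \<noteq> 0" unfolding gp_def using nd_pos[OF d] by simp
    then have "g \<in> ?Z" using gN by simp
    moreover have "t \<in> ?B g" using pq g by auto
    ultimately show "t \<in> (\<Union>g\<in>?Z. ?B g)" by blast
  qed
  have finZ: "finite ?Z" by simp
  have "card (?T - ?S) \<le> card (\<Union>g\<in>?Z. ?B g)"
    by (rule card_mono[OF _ sub]) (simp add: finZ)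
  also have "\<dots> \<le> (\<Sum>g\<in>?Z. card (?B g))" by (rule card_UN_le[OF finZ])
  also have "\<dots> \<le> (\<Sum>g\<in>?Z. w * w)"
  proof (rule sum_mono)
    fix g show "card (?B g) \<le> w * w"
    proof -
      have "card {g + 1 - w..g} \<le> w" by simp
      moreover have "card {g + 1..g + w} \<le> w" by simp
      ultimately show ?thesis unfolding card_cartesian_product by (rule mult_le_mono)
    qed
  qed
  also have "\<dots> = w * w * card ?Z" by simp
  finally have TS: "card (?T - ?S) \<le> w * w * card ?Z" .
  have "card ?T \<le> card ?S + card (?T - ?S)"
  proof -
    have "?T = ?S \<union> (?T - ?S)" by auto
    moreover have "card (?S \<union> (?T - ?S)) \<le> card ?S + card (?T - ?S)" by (rule card_Un_le)
    ultimately show ?thesis by simp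
  qed
  then show ?thesis using T TS by linarith
qed

end


lemma jump:
  assumes "0 < N" "a / real N < v" "v \<le> b / real N"
  shows "pair_count x a N + card {(i, j). i \<in> {1..N} \<and> j \<in> {1..N} \<and> i \<noteq> j \<and>
      nint_dist (x i - x j) = v} \<le> pair_count x b N"
proof -
  let ?A = "{(i, j). i \<in> {1..N} \<and> j \<in> {1..N} \<and> i \<noteq> j \<and> nint_dist (x i - x j) \<le> a / real N}"
  let ?B = "{(i, j). i \<in> {1..N} \<and> j \<in> {1..N} \<and> i \<noteq> j \<and> nint_dist (x i - x j) \<le> b / real N}"
  let ?E = "{(i, j). i \<in> {1..N} \<and> j \<in> {1..N} \<and> i \<noteq> j \<and> nint_dist (x i - x j) = v}"
  have finA: "finite ?A" by (rule finite_subset[of _ "{1..N} \<times> {1..N}"]) auto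
  have finE: "finite ?E" by (rule finite_subset[of _ "{1..N} \<times> {1..N}"]) auto
  have finB: "finite ?B" by (rule finite_subset[of _ "{1..N} \<times> {1..N}"]) auto
  have dis: "?A \<inter> ?E = {}" using assms(2) by auto
  have sub: "?A \<union> ?E \<subseteq> ?B" using assms(2,3) by auto
  have "card ?A + card ?E = card (?A \<union> ?E)" using card_Un_disjoint[OF finA finE dis] by simp
  also have "\<dots> \<le> card ?B" by (rule card_mono[OF finB sub])
  finally show ?thesis unfolding pair_count_def .
qed

theorem theorem2:
  fixes f :: "real \<Rightarrow> real" and x :: "nat \<Rightarrow> real"
  assumes f_nonneg: "\<And>s. s \<ge> 0 \<Longrightarrow> f s \<ge> 0"
    and f_cont: "continuous_on {0..} f"
    and f_mono: "mono_on {0..} f"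
    and x_range: "\<And>n. n \<ge> 1 \<Longrightarrow> x n \<in> {0..<1}"
    and few_gaps: "\<exists>k::nat. infinite {N::nat. card (gap_lengths x N) \<le> k}"
  shows "\<not> (\<forall>s\<ge>0. (\<lambda>N. real (pair_count x s N) / real N) \<longlonglongrightarrow> f s)"
proof
  assume H: "\<forall>s\<ge>0. (\<lambda>N. real (pair_count x s N) / real N) \<longlonglongrightarrow> f s"
  obtain k :: nat where G: "infinite {N::nat. card (gap_lengths x N) \<le> k}" using few_gaps by blast
  define w :: nat where "w = nat \<lceil>2 * f 0\<rceil> + 3"
  have w1: "w \<ge> 1" unfolding w_def by simp
  have wf: "real w / 2 \<ge> f 0 + 1" unfolding w_def using f_nonneg[of 0]
    by (simp add: of_nat_nat) linarith
  define B :: real where "B = 4 * real w * (real k + 1)"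
  define \<eta> :: real where "\<eta> = 1 / B"
  have Bpos: "B > 0" unfolding B_def using w1 by simp
  have etapos: "\<eta> > 0" unfolding \<eta>_def using Bpos by simp
  have "uniformly_continuous_on {0..B+1} f"
    by (rule compact_uniformly_continuous[OF continuous_on_subset[OF f_cont]]) auto
  then obtain \<delta> where \<delta>: "\<delta> > 0"
    "\<And>a b. a \<in> {0..B+1} \<Longrightarrow> b \<in> {0..B+1} \<Longrightarrow> dist b a < \<delta> \<Longrightarrow> dist (f b) (f a) < \<eta> / 2"
    unfolding uniformly_continuous_on_def using etapos by (metis half_gt_zero)
  define h where "h = min (\<delta> / 2) 1"
  have hpos: "h > 0" "h < \<delta>" "h \<le> 1" unfolding h_def using \<delta>(1) by auto
  define J :: nat where "J = nat \<lceil>B / h\<rceil>"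
  have JB: "real J * h < B + h" "B \<le> real J * h"
  proof -
    have "real J = of_int \<lceil>B / h\<rceil>" unfolding J_def using Bpos hpos by simp
    then have "B / h \<le> real J" "real J < B / h + 1" by linarith+
    then show "real J * h < B + h" "B \<le> real J * h" using hpos by (simp_all add: field_simps)
  qed
  let ?F = "\<lambda>N s. real (pair_count x s N) / real N"
  have ev1: "eventually (\<lambda>N. \<forall>j\<in>{..J}. \<bar>?F N (real j * h) - f (real j * h)\<bar> < \<eta> / 4) sequentially"
  proof (rule eventually_ball_finite)
    show "\<forall>j\<in>{..J}. eventually (\<lambda>N. \<bar>?F N (real j * h) - f (real j * h)\<bar> < \<eta> / 4) sequentially"
    proof
      fix j assume "j \<in> {..J}"
      have "(\<lambda>N. ?F N (real j * h)) \<longlonglongrightarrow> f (real j * h)" using H hpos by simp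
      from tendstoD[OF this, of "\<eta> / 4"] etapos
      show "eventually (\<lambda>N. \<bar>?F N (real j * h) - f (real j * h)\<bar> < \<eta> / 4) sequentially"
        by (simp add: dist_real_def)
    qed
  qed simp
  have ev2: "eventually (\<lambda>N. \<bar>?F N 0 - f 0\<bar> < 1 / 2) sequentially"
  proof -
    have "(\<lambda>N. ?F N 0) \<longlonglongrightarrow> f 0" using H by simp
    from tendstoD[OF this, of "1 / 2"] show ?thesis by (simp add: dist_real_def)
  qed
  obtain N0 where N0: "\<And>N. N \<ge> N0 \<Longrightarrow> (\<forall>j\<in>{..J}. \<bar>?F N (real j * h) - f (real j * h)\<bar> < \<eta> / 4)
      \<and> \<bar>?F N 0 - f 0\<bar> < 1 / 2"
    using eventually_conj[OF ev1 ev2] unfolding eventually_sequentially by blast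
  obtain N where N: "N \<ge> N0 + 4 * w + 2" "card (gap_lengths x N) \<le> k"
    using G unfolding infinite_nat_iff_unbounded_le by blast
  have N2: "N \<ge> 2" and N4w: "N \<ge> 4 * w" using N by auto
  have conv: "\<forall>j\<in>{..J}. \<bar>?F N (real j * h) - f (real j * h)\<bar> < \<eta> / 4" "\<bar>?F N 0 - f 0\<bar> < 1 / 2"
    using N0[of N] N by auto
  define y where "y = sort (map x [1..<N+1])"
  obtain \<sigma> where \<sigma>: "inj_on \<sigma> {..<N}" "\<sigma> ` {..<N} \<subseteq> {1..N}"
    "\<And>p. p < N \<Longrightarrow> y ! p = x (\<sigma> p)" "length y = N" "sorted y"
    unfolding y_def using sort_perm[where N=N and x=x] by blast
  have rng: "y ! p \<in> {0..<1}" if "p < N" for p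
  proof -
    have "\<sigma> p \<in> {1..N}" using \<sigma>(2) that by blast
    then show ?thesis using \<sigma>(3)[OF that] x_range[of "\<sigma> p"] by simp
  qed
  interpret S: setting x N \<sigma> y
    using N2 \<sigma> rng by unfold_locales auto
  have gapeq: "gap_lengths x N = S.gp ` {..<N}"
    unfolding gap_lengths_def Let_def S.gp_def y_def[symmetric] by auto
  have cardgp: "card (S.gp ` {..<N}) \<le> k" using N(2) gapeq by simp
  define Z where "Z = {p. p < N \<and> S.gp p \<noteq> 0}"
  show False
  proof (cases "real N \<le> 4 * real w * real (card Z)")
    case True
    have finZ: "finite Z" unfolding Z_def by simp
    have ZN: "Z \<subseteq> {..<N}" unfolding Z_def by auto
    have "card Z > 0"
    proof (rule ccontr)
      assume "\<not> card Z > 0"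
      then have "card Z = 0" by simp
      then show False using True N2 by simp
    qed
    then have Zne: "Z \<noteq> {}" by auto
    obtain v where v: "v \<in> S.gp ` Z" "card Z \<le> card (S.gp ` Z) * card {p\<in>Z. S.gp p = v}"
      using pigeon[OF finZ Zne, of S.gp] by blast
    define m where "m = card {p\<in>Z. S.gp p = v}"
    have "card (S.gp ` Z) \<le> card (S.gp ` {..<N})" by (rule card_mono) (use ZN in auto)
    then have cZ: "card (S.gp ` Z) \<le> k" using cardgp by simp
    have vpos: "v > 0"
    proof -
      obtain p where "p \<in> Z" "v = S.gp p" using v(1) by blast
      then show ?thesis using S.gp_nonneg[of p] unfolding Z_def by auto
    qed
    have fib: "{p\<in>Z. S.gp p = v} = {p. p < N \<and> S.gp p = v}" using vpos unfolding Z_def by auto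
    have "real m * v = (\<Sum>p\<in>{p. p < N \<and> S.gp p = v}. S.gp p)" unfolding m_def fib by simp
    also have "\<dots> \<le> (\<Sum>p<N. S.gp p)"
      by (rule sum_mono2) (auto simp: S.gp_nonneg)
    also have "\<dots> \<le> 1" by (rule S.gap_sum)
    finally have mv: "real m * v \<le> 1" .
    have "card Z \<le> k * m" using v(2) cZ unfolding m_def by (meson le_trans mult_le_mono1)
    then have "real (card Z) \<le> real k * real m" by (metis of_nat_le_iff of_nat_mult)
    then have "4 * real w * real (card Z) \<le> 4 * real w * (real k * real m)"
      by (intro mult_left_mono) auto
    then have Nkm: "real N \<le> 4 * real w * (real k * real m)"
      using True by linarith
    define s where "s = real N * v"
    have spos: "s > 0" unfolding s_def using vpos N2 by simp
    have "s \<le> 4 * real w * (real k * real m) * v" unfolding s_def using Nkm vpos by (simp add: mult_right_mono)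
    also have "\<dots> = 4 * real w * real k * (real m * v)" by (simp add: algebra_simps)
    also have "\<dots> \<le> 4 * real w * real k * 1" using mv by (intro mult_left_mono) auto
    also have "\<dots> \<le> B" unfolding B_def by (simp add: algebra_simps)
    finally have sB: "s \<le> B" .
    have "4 * real w * (real k * real m) \<le> B * real m" unfolding B_def by (simp add: algebra_simps)
    then have NBm: "real N \<le> B * real m" using Nkm by linarith
    then have mN: "\<eta> \<le> real m / real N" unfolding \<eta>_def using Bpos N2 by (simp add: field_simps)
    define c where "c = \<lceil>s / h\<rceil>"
    have c1: "c \<ge> 1" unfolding c_def using spos hpos by simp
    have c2: "real_of_int c - 1 < s / h" "s / h \<le> real_of_int c" unfolding c_def by linarith+
    have c3: "c \<le> \<lceil>B / h\<rceil>" unfolding c_def using sB hpos by (intro ceiling_mono divide_right_mono) auto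
    define j where "j = nat c - 1"
    have jr: "real (j + 1) = real_of_int c" "real j = real_of_int c - 1" unfolding j_def using c1 by auto
    have jJ: "j + 1 \<le> J" unfolding J_def j_def using c1 c3 by linarith
    have "(real_of_int c - 1) * h < s" using c2(1) hpos by (simp add: field_simps)
    then have lo: "real j * h < s" using jr(2) by simp
    have "s \<le> real_of_int c * h" using c2(2) hpos by (simp add: field_simps)
    then have hi: "s \<le> real (j + 1) * h" using jr(1) by simp
    let ?E = "{(i, j). i \<in> {1..N} \<and> j \<in> {1..N} \<and> i \<noteq> j \<and> nint_dist (x i - x j) = v}"
    have "pair_count x (real j * h) N + card ?E \<le> pair_count x (real (j + 1) * h) N"
    proof (rule jump)
      show "0 < N" using N2 by simp
      have Np: "real N > 0" using N2 by simp
      show "real j * h / real N < v" using lo Np unfolding s_def by (simp add: pos_divide_less_eq mult.commute)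
      show "v \<le> real (j + 1) * h / real N" using hi Np unfolding s_def by (simp add: pos_le_divide_eq mult.commute)
    qed
    then have "real (pair_count x (real j * h) N + card ?E) \<le> real (pair_count x (real (j + 1) * h) N)"
      by (simp only: of_nat_le_iff)
    moreover have "m \<le> card ?E" unfolding m_def fib by (rule S.exact_pairs)
    ultimately have "real (pair_count x (real j * h) N) + real m \<le> real (pair_count x (real (j + 1) * h) N)"
      by simp
    then have "(real (pair_count x (real j * h) N) + real m) / real N \<le> ?F N (real (j + 1) * h)"
      by (intro divide_right_mono) auto
    then have "?F N (real j * h) + real m / real N \<le> ?F N (real (j + 1) * h)"
      by (simp add: add_divide_distrib)
    then have jumpF: "?F N (real j * h) + \<eta> \<le> ?F N (real (j + 1) * h)" using mN by linarith
    have cj: "\<bar>?F N (real j * h) - f (real j * h)\<bar> < \<eta> / 4"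
      "\<bar>?F N (real (j + 1) * h) - f (real (j + 1) * h)\<bar> < \<eta> / 4"
      using bspec[OF conv(1), of j] bspec[OF conv(1), of "j + 1"] jJ by (simp only: atMost_iff; linarith)+
    have "real (j + 1) \<le> real J" using jJ by linarith
    then have "real (j + 1) * h \<le> real J * h" using hpos by (intro mult_right_mono) auto
    then have "real (j + 1) * h \<le> B + 1" using JB(1) hpos(3) by linarith
    moreover have "real j * h \<le> real (j + 1) * h" using hpos by (intro mult_right_mono) auto
    moreover have "0 \<le> real j * h" using hpos by simp
    ultimately have inB: "real (j + 1) * h \<in> {0..B+1}" "real j * h \<in> {0..B+1}" by auto
    have "real (j + 1) * h - real j * h = h" by (simp add: algebra_simps)
    then have "dist (real (j + 1) * h) (real j * h) < \<delta>" using hpos by (simp add: dist_real_def)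
    from \<delta>(2)[OF inB(2) inB(1) this]
    have "\<bar>f (real (j + 1) * h) - f (real j * h)\<bar> < \<eta> / 2" by (simp add: dist_real_def)
    then show False using cj jumpF by linarith
  next
    case False
    have "w * (N - w) \<le> pair_count x 0 N + w * w * card Z"
      using S.window[of w] S.zero_pairs[of w] unfolding Z_def by linarith
    then have "real (w * (N - w)) \<le> real (pair_count x 0 N + w * w * card Z)"
      by (simp only: of_nat_le_iff)
    moreover have "real (w * (N - w)) = real w * (real N - real w)" using N4w by (simp add: of_nat_diff)
    moreover have "real (pair_count x 0 N + w * w * card Z) = real (pair_count x 0 N) + real w * (real w * real (card Z))"
      by simp
    ultimately have A: "real w * (real N - real w) \<le> real (pair_count x 0 N) + real w * (real w * real (card Z))"
      by linarith
    have "real w * (real w * real (card Z)) \<le> real w * (real N / 4)"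
      using False by (intro mult_left_mono) auto
    moreover have "real w * real w \<le> real w * (real N / 4)"
      using N4w by (intro mult_left_mono) auto
    ultimately have "real w * real N / 2 \<le> real (pair_count x 0 N)" using A
      by (simp add: algebra_simps)
    then have "real w / 2 \<le> ?F N 0" using N2 by (simp add: field_simps)
    then show False using conv(2) wf by linarith
  qed
qed

end
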